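(* For each integer $n\ge0$ let \[ \theta^\Delta_n(x)=\sum_{k=0}^n\frac{(n+k)!}{2^k(n-k)!\,k!}\,(x)_{n-k}, \] where $(x)_j=x(x-1)\cdots(x-j+1)$ and $(x)_0=1$. Then for every integer $n\ge0$ and every $x\in\mathbb{C}$, \[ (x-2n)\,\theta^\Delta_n(x+1)-4(x-n)\,\theta^\Delta_n(x)+3x\,\theta^\Delta_n(x-1)=0 . \]
   Context: $\theta^\Delta_n$ is called the difference reverse Bessel polynomial of degree $n$. *)

theory Defs
  imports Complex_Main
begin

definition falling_fact :: "complex \<Rightarrow> nat \<Rightarrow> complex" where
  "falling_fact x j = (\<Prod>i<j. x - of_nat i)"

definition theta_delta :: "nat \<Rightarrow> complex \<Rightarrow> complex" where
  "theta_delta n x = (\<Sum>k=0..n. of_nat (fact (n + k)) / (2 ^ k * of_nat (fact (n - k)) * of_nat (fact k))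
                        * falling_fact x (n - k))"

end

theory Submission
  imports Defs
begin

definition acoef :: "nat \<Rightarrow> nat \<Rightarrow> complex" where
  "acoef n k = of_nat (fact (n + k)) / (2 ^ k * of_nat (fact (n - k)) * of_nat (fact k))"

lemma ff_Suc: "falling_fact x (Suc j) = falling_fact x j * (x - of_nat j)"
  by (simp add: falling_fact_def)

lemma ff_shift: "falling_fact (x + 1) (Suc j) = (x + 1) * falling_fact x j"
proof (induction j)
  case 0 then show ?case by (simp add: falling_fact_def)
next
  case (Suc j)
  have "falling_fact (x + 1) (Suc (Suc j)) = falling_fact (x + 1) (Suc j) * (x + 1 - of_nat (Suc j))"
    by (rule ff_Suc)
  also have "\<dots> = (x + 1) * falling_fact x (Suc j)"
    using Suc by (simp add: ff_Suc algebra_simps)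
  finally show ?case .
qed

lemma ff_shift2: "x * falling_fact (x - 1) j = falling_fact x (Suc j)"
  using ff_shift[of "x - 1" j] by simp

lemma E_lemma:
  "(x - 2 * of_nat n) * falling_fact (x + 1) j - 4 * (x - of_nat n) * falling_fact x j
     + 3 * x * falling_fact (x - 1) j
   = 2 * (of_nat n - of_nat j) * falling_fact x j
     + of_nat j * (of_nat j - 1 - 2 * of_nat n) * falling_fact x (j - 1)"
proof (cases j)
  case 0 then show ?thesis by (simp add: falling_fact_def algebra_simps)
next
  case (Suc i)
  have "x * falling_fact (x - 1) j = falling_fact x (Suc (Suc i))"
    using Suc by (simp add: ff_shift2)
  also have "\<dots> = falling_fact x i * (x - of_nat i) * (x - of_nat i - 1)"
    by (simp only: ff_Suc) (simp add: algebra_simps)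
  finally have "x * falling_fact (x - 1) j = falling_fact x i * (x - of_nat i) * (x - of_nat i - 1)" .
  then have h: "3 * x * falling_fact (x - 1) j = 3 * (falling_fact x i * (x - of_nat i) * (x - of_nat i - 1))"
    by (metis mult.assoc)
  have h1: "falling_fact (x + 1) j = (x + 1) * falling_fact x i" using Suc by (simp only: ff_shift)
  have h2: "falling_fact x j = falling_fact x i * (x - of_nat i)" using Suc by (simp only: ff_Suc)
  have h3: "j - 1 = i" "of_nat j = of_nat i + (1::complex)" using Suc by auto
  show ?thesis unfolding h h1 h2 h3 by (simp add: algebra_simps)
qed

lemma acoef_step:
  assumes "k < n"
  shows "acoef n (Suc k) * (2 * of_nat (Suc k)) = acoef n k * (of_nat (n - k) * (of_nat n + of_nat k + 1))"
proof -
  have f1: "fact (n + Suc k) = (of_nat (n + k + 1) :: complex) * fact (n + k)"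
    by (simp add: fact_Suc)
  have e: "n - k = Suc (n - Suc k)" using assms by simp
  have f2: "fact (n - k) = (of_nat (n - k) :: complex) * fact (n - Suc k)"
    by (subst e, simp only: fact_Suc, simp add: e)
  have f3: "fact (Suc k) = (of_nat (Suc k) :: complex) * fact k" by (simp add: fact_Suc)
  have nz: "(fact (n - Suc k) :: complex) \<noteq> 0" "(fact k :: complex) \<noteq> 0" "of_nat (n - k) \<noteq> (0::complex)"
    using assms by auto
  have g: "M * A / (2 ^ Suc k * B * (kk * C)) * (2 * kk) = A / (2 ^ k * (d * B) * C) * (d * M)"
    if "d \<noteq> 0" "B \<noteq> 0" "C \<noteq> 0" "kk \<noteq> 0" for M A B C d kk :: complex
    using that by (simp add: field_simps)
  have m: "of_nat n + of_nat k + 1 = (of_nat (n + k + 1)::complex)" by simp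
  show ?thesis
    unfolding acoef_def of_nat_fact f1 f2 f3 m
    by (rule g[OF nz(3) nz(1) nz(2) of_nat_neq_0])
qed

theorem mainTheorem11:
  fixes n :: nat and x :: complex
  shows "(x - 2 * of_nat n) * theta_delta n (x + 1) - 4 * (x - of_nat n) * theta_delta n x
           + 3 * x * theta_delta n (x - 1) = 0"
proof -
  define G where "G k = (if k \<le> n then acoef n k * (2 * of_nat k) * falling_fact x (n - k) else 0)" for k
  have th: "theta_delta n y = (\<Sum>k=0..n. acoef n k * falling_fact y (n - k))" for y
    by (simp add: theta_delta_def acoef_def)
  have step: "acoef n k * ((x - 2 * of_nat n) * falling_fact (x + 1) (n - k) - 4 * (x - of_nat n) * falling_fact x (n - k)
     + 3 * x * falling_fact (x - 1) (n - k)) = G k - G (Suc k)" if "k \<le> n" for k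
  proof (cases "k < n")
    case True
    have e: "n - k - 1 = n - Suc k" by simp
    have "acoef n k * ((x - 2 * of_nat n) * falling_fact (x + 1) (n - k) - 4 * (x - of_nat n) * falling_fact x (n - k)
     + 3 * x * falling_fact (x - 1) (n - k))
      = acoef n k * (2 * (of_nat n - of_nat (n - k)) * falling_fact x (n - k))
        - acoef n k * (of_nat (n - k) * (of_nat n + of_nat k + 1)) * falling_fact x (n - Suc k)"
      using True unfolding E_lemma by (simp add: e of_nat_diff algebra_simps)
    also have "\<dots> = acoef n k * (2 * of_nat k) * falling_fact x (n - k)
        - acoef n (Suc k) * (2 * of_nat (Suc k)) * falling_fact x (n - Suc k)"
      unfolding acoef_step[OF True] using True by (simp add: of_nat_diff algebra_simps)
    also have "\<dots> = G k - G (Suc k)"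
      using True by (simp add: G_def)
    finally show ?thesis .
  next
    case False
    then have "k = n" using that by simp
    then show ?thesis by (simp add: G_def falling_fact_def algebra_simps)
  qed
  have "(x - 2 * of_nat n) * theta_delta n (x + 1) - 4 * (x - of_nat n) * theta_delta n x
           + 3 * x * theta_delta n (x - 1)
     = (\<Sum>k=0..n. acoef n k * ((x - 2 * of_nat n) * falling_fact (x + 1) (n - k) - 4 * (x - of_nat n) * falling_fact x (n - k)
     + 3 * x * falling_fact (x - 1) (n - k)))"
    by (simp add: th sum_distrib_left sum_subtractf sum.distrib algebra_simps)
  also have "\<dots> = (\<Sum>k=0..n. G k - G (Suc k))"
    by (rule sum.cong) (simp_all only: atLeastAtMost_iff step)
  also have "\<dots> = G 0 - G (Suc n)"
    using sum_Suc_diff[of 0 n "\<lambda>k. - G k"] by simp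
  also have "\<dots> = 0" by (simp add: G_def)
  finally show ?thesis .
qed

end
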